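(* Let $G$ be a finite simple graph with an edge $e=\{x,y\}\in E(G)$ such that $\deg(x)\le 2$ and $\deg(y)\le 2$. Then $M_2(G)$ is contractible.
   Context: A $2$-matching of a graph $G$ is a set of edges $H\subseteq E(G)$ such that every vertex has degree at most $2$ in $H$. The $2$-matching complex $M_2(G)$ is the simplicial complex whose vertices are the edges of $G$ and whose faces are the $2$-matchings of $G$. *)

theory Defs
  imports "HOL-Analysis.Analysis"
begin

definition finite_simple_graph :: "'a set \<Rightarrow> 'a set set \<Rightarrow> bool" where
  "finite_simple_graph V E \<longleftrightarrow> finite V \<and> (\<forall>e\<in>E. e \<subseteq> V \<and> card e = 2)"

definition degree :: "'a set set \<Rightarrow> 'a \<Rightarrow> nat" where
  "degree E v = card {e \<in> E. v \<in> e}"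

definition two_matching :: "'a set set \<Rightarrow> 'a set set \<Rightarrow> bool" where
  "two_matching E H \<longleftrightarrow> H \<subseteq> E \<and> (\<forall>v. degree H v \<le> 2)"

definition two_matching_complex :: "'a set set \<Rightarrow> 'a set set set" where
  "two_matching_complex E = {H. two_matching E H}"

text \<open>Standard geometric realization of a simplicial complex K (a family of finite
  faces) in the space of real-valued functions on vertices, with the product topology:
  convex combinations of the vertices of a face, in barycentric coordinates.\<close>
definition geometric_realization :: "'v set set \<Rightarrow> ('v \<Rightarrow> real) set" where
  "geometric_realization K =
     {f. \<exists>\<sigma>\<in>K. (\<forall>v. f v \<ge> 0) \<and> (\<forall>v. v \<notin> \<sigma> \<longrightarrow> f v = 0) \<and> sum f \<sigma> = 1}"

definition realization_top :: "'v set set \<Rightarrow> ('v \<Rightarrow> real) topology" where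
  "realization_top K = subtopology (powertop_real UNIV) (geometric_realization K)"

end

theory Submission
  imports Defs
begin

lemma cone_face:
  assumes "{x, y} \<in> E" "degree E x \<le> 2" "degree E y \<le> 2"
    and "two_matching E H" and "finite E"
  shows "two_matching E (insert {x,y} H)"
proof -
  have HE: "H \<subseteq> E" using assms(4) by (simp add: two_matching_def)
  have "degree (insert {x,y} H) v \<le> 2" for v
  proof (cases "v \<in> {x,y}")
    case True
    have fin: "finite {e \<in> E. v \<in> e}"
      using assms(5) by simp
    have "degree (insert {x,y} H) v \<le> degree E v"
      unfolding degree_def using HE assms(1) by (intro card_mono[OF fin]) auto
    moreover have "degree E v \<le> 2" using True assms(2,3) by auto
    ultimately show ?thesis by linarith
  next
    case False
    then have "{e \<in> insert {x,y} H. v \<in> e} = {e \<in> H. v \<in> e}" by auto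
    then show ?thesis using assms(4) by (simp add: degree_def two_matching_def)
  qed
  then show ?thesis using HE assms(1) by (simp add: two_matching_def)
qed

theorem mainTheorem6:
  fixes V :: "'a set" and E :: "'a set set" and x y :: 'a
  assumes "finite_simple_graph V E"
    and "{x, y} \<in> E"
    and "degree E x \<le> 2" and "degree E y \<le> 2"
  shows "contractible_space (realization_top (two_matching_complex E))"
proof -
  define K where "K = two_matching_complex E"
  define S where "S = geometric_realization K"
  define d :: "'a set \<Rightarrow> real" where "d = (\<lambda>v. if v = {x,y} then 1 else 0)"
  define h where "h = (\<lambda>(t::real, f::'a set \<Rightarrow> real). (\<lambda>v. (1 - t) * f v + t * d v))"
  have finE: "finite E"
  proof -
    have "E \<subseteq> Pow V" using assms(1) by (auto simp: finite_simple_graph_def)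
    then show ?thesis using assms(1) finite_subset by (auto simp: finite_simple_graph_def)
  qed
  have cone: "insert {x,y} H \<in> K" if "H \<in> K" for H
    using cone_face[OF assms(2-4) _ finE] that by (simp add: K_def two_matching_complex_def)
  have img: "h (t, f) \<in> S" if "t \<in> {0..1}" "f \<in> S" for t f
  proof -
    from that(2) obtain \<sigma> where s: "\<sigma> \<in> K" "\<forall>v. f v \<ge> 0" "\<forall>v. v \<notin> \<sigma> \<longrightarrow> f v = 0"
      "sum f \<sigma> = 1" by (auto simp: S_def geometric_realization_def)
    have fin: "finite \<sigma>" using s(4) by (metis sum.infinite zero_neq_one)
    let ?\<tau> = "insert {x,y} \<sigma>"
    have "sum f ?\<tau> = 1"
      using s(3,4) fin by (cases "{x,y} \<in> \<sigma>") (auto simp: sum.insert insert_absorb)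
    moreover have "sum d ?\<tau> = 1"
    proof -
      have "sum d ?\<tau> = sum d {{x,y}}"
        by (rule sum.mono_neutral_right) (auto simp: fin d_def)
      then show ?thesis by (simp add: d_def)
    qed
    ultimately have "sum (h (t, f)) ?\<tau> = 1"
      by (simp add: h_def sum.distrib sum_distrib_left[symmetric])
    moreover have "\<forall>v. h (t, f) v \<ge> 0" using that(1) s(2) by (auto simp: h_def d_def)
    moreover have "\<forall>v. v \<notin> ?\<tau> \<longrightarrow> h (t, f) v = 0" using s(3) by (auto simp: h_def d_def)
    ultimately show ?thesis using cone[OF s(1)] unfolding S_def geometric_realization_def by blast
  qed
  have top: "realization_top K = subtopology (powertop_real UNIV) S"
    by (simp add: realization_top_def S_def)
  have cont: "continuous_map (prod_topology (top_of_set {0..1}) (realization_top K)) (realization_top K) h"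
    unfolding top
  proof (rule continuous_map_in_subtopology[THEN iffD2], rule conjI)
    show "continuous_map (prod_topology (top_of_set {0..1}) (subtopology (powertop_real UNIV) S)) (powertop_real UNIV) h"
    proof (subst continuous_map_componentwise_UNIV, intro allI)
      fix v
      have "continuous_map (prod_topology (top_of_set {0..1::real}) (subtopology (powertop_real UNIV) S)) euclideanreal
          (\<lambda>p. (1 - fst p) * snd p v + fst p * d v)"
      proof -
        let ?X = "prod_topology (top_of_set {0..1::real}) (subtopology (powertop_real UNIV) S)"
        have f: "continuous_map ?X euclideanreal fst"
          using continuous_map_fst continuous_map_into_fulltopology by blast
        have p: "continuous_map (subtopology (powertop_real UNIV) S) euclideanreal (\<lambda>f. f v)"
          by (rule continuous_map_from_subtopology) (rule continuous_map_product_projection, simp)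
        have s: "continuous_map ?X euclideanreal (\<lambda>p. snd p v)"
          using continuous_map_compose[OF continuous_map_snd p] by (simp add: o_def)
        show ?thesis
          by (intro continuous_map_add continuous_map_real_mult continuous_map_diff f s) auto
      qed
      then show "continuous_map (prod_topology (top_of_set {0..1}) (subtopology (powertop_real UNIV) S)) euclideanreal (\<lambda>p. h p v)"
        by (simp add: h_def case_prod_beta)
    qed
    show "h \<in> topspace (prod_topology (top_of_set {0..1}) (subtopology (powertop_real UNIV) S)) \<rightarrow> S"
      using img by (auto simp: topspace_subtopology)
  qed
  have "homotopic_with (\<lambda>x. True) (realization_top K) (realization_top K) id (\<lambda>_. d)"
    unfolding homotopic_with_def
    apply (rule exI[of _ h])
    apply (intro conjI)
    using cont apply simp
      apply (auto simp: h_def)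
    done
  then show ?thesis unfolding contractible_space_def K_def by blast
qed

end
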